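(* Let $d\ge1$ and $q\in\{2,4\}$, and let $G$ be a function on $[0,\infty)$ with $G\in\mathcal M_{d,0,q}\cap\mathcal N_{\frac q2-1}$. Let $S_1,\ldots,S_{q/2}$ be the subintervals of $[0,\infty)$ from the definition of sign changes for $G$. Then $G(x)\ge0$ for $x\in S_1\cup S_3\cup\cdots$ and $G(x)\le0$ for $x\in S_2\cup S_4\cup\cdots$. Moreover, $\mathrm{sign}(B_{d,q}(G))=(-1)^{q/2+1}$.
   Context: $B_{d,i}(g)=\int_0^\infty x^{d-1+i}g(x)dx$; $b_d=2\pi^{d/2}/\Gamma(d/2)$. $\mathcal M_{d,0,q}$ is the set of $g$ on $[0,\infty)$ with $B_{d,0}(g)=b_d^{-1}$, $B_{d,i}(g)=0$ for $i=2,4,\ldots,q-2$, and $B_{d,q}(g)\ne0$. $\mathcal N_j$ is the set of functions on $[0,\infty)$ that change their sign exactly $j$ times on $[0,\infty)$, where $g$ changes its sign $k$ times on $[a,b]$ if there are $a=x_0<\cdots<x_{k+1}=b$ such that, with $S_j=[x_{j-1},x_j]$, on each $S_j$ either $g\le0$ with $g<0$ somewhere or $g\ge0$ with $g>0$ somewhere, and (if $k\ge1$) $g(x)g(y)\le0$ for all $x\in S_j$, $y\in S_{j+1}$. *)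

theory Defs
  imports "HOL-Analysis.Analysis"
begin

definition Bmom :: "nat \<Rightarrow> nat \<Rightarrow> (real \<Rightarrow> real) \<Rightarrow> real" where
  "Bmom d i g = integral {0..} (\<lambda>x. x ^ (d - 1 + i) * g x)"

text \<open>b_d = 2 pi^(d/2) / Gamma(d/2), surface area of the unit sphere.\<close>
definition bconst :: "nat \<Rightarrow> real" where
  "bconst d = 2 * pi powr (real d / 2) / Gamma (real d / 2)"

definition Mclass :: "nat \<Rightarrow> nat \<Rightarrow> (real \<Rightarrow> real) set" where
  "Mclass d q = {g.
     (\<forall>i\<in>{0..q}. even i \<longrightarrow> (\<lambda>x. x ^ (d - 1 + i) * g x) absolutely_integrable_on {0..}) \<and>
     Bmom d 0 g = 1 / bconst d \<and>
     (\<forall>i. even i \<and> 2 \<le> i \<and> i \<le> q - 2 \<longrightarrow> Bmom d i g = 0) \<and>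
     Bmom d q g \<noteq> 0}"

text \<open>Subinterval S_j (j = 1..k+1) for partition points x 0 = 0 < x 1 < ... < x k,
  with x_(k+1) = infinity.\<close>
definition seg :: "(nat \<Rightarrow> real) \<Rightarrow> nat \<Rightarrow> nat \<Rightarrow> real set" where
  "seg x k j = (if j = Suc k then {x (j - 1)..} else {x (j - 1)..x j})"

definition sign_part :: "(real \<Rightarrow> real) \<Rightarrow> (nat \<Rightarrow> real) \<Rightarrow> nat \<Rightarrow> bool" where
  "sign_part g x k \<longleftrightarrow>
     x 0 = 0 \<and> (\<forall>i<k. x i < x (Suc i)) \<and>
     (\<forall>j\<in>{1..Suc k}.
        ((\<forall>t\<in>seg x k j. g t \<le> 0) \<and> (\<exists>t\<in>seg x k j. g t < 0)) \<or>
        ((\<forall>t\<in>seg x k j. g t \<ge> 0) \<and> (\<exists>t\<in>seg x k j. g t > 0))) \<and>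
     (k \<ge> 1 \<longrightarrow> (\<forall>j\<in>{1..k}. \<forall>s\<in>seg x k j. \<forall>t\<in>seg x k (Suc j). g s * g t \<le> 0))"

definition changes_sign :: "(real \<Rightarrow> real) \<Rightarrow> nat \<Rightarrow> bool" where
  "changes_sign g k \<longleftrightarrow> (\<exists>x. sign_part g x k)"

definition Nclass :: "nat \<Rightarrow> (real \<Rightarrow> real) set" where
  "Nclass j = {g. changes_sign g j \<and> (\<forall>k. changes_sign g k \<longrightarrow> k = j)}"

end

theory Submission
  imports Defs
begin

lemma bconst_pos: "d \<ge> 1 \<Longrightarrow> bconst d > 0"
proof -
  assume "d \<ge> 1"
  then have "real d / 2 > 0" by simp
  then have "Gamma (real d / 2) > 0" by (rule Gamma_real_pos)
  then show ?thesis by (simp add: bconst_def)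
qed

lemma mom_int:
  assumes "G \<in> Mclass d q" "i \<le> q" "even i"
  shows "(\<lambda>x. x ^ (d - 1 + i) * G x) integrable_on {0..}"
  using assms unfolding Mclass_def absolutely_integrable_on_def by auto

lemma comb_int:
  assumes "d \<ge> 1" "G \<in> Mclass d q" "i + 2 \<le> q" "even i"
  shows "integral {0..} (\<lambda>y. y ^ (d - 1 + i) * (y^2 - c) * G y) = Bmom d (i+2) G - c * Bmom d i G"
proof -
  have i1: "(\<lambda>x. x ^ (d - 1 + (i+2)) * G x) integrable_on {0..}"
    using mom_int[OF assms(2), of "i+2"] assms by simp
  have i2: "(\<lambda>x. c * (x ^ (d - 1 + i) * G x)) integrable_on {0..}"
    using integrable_on_cmult_left[OF mom_int[OF assms(2), of i], of c] assms by simp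
  have eq: "(\<lambda>y. y ^ (d - 1 + i) * (y^2 - c) * G y) = (\<lambda>x. x ^ (d - 1 + (i+2)) * G x - c * (x ^ (d - 1 + i) * G x))"
    by (rule ext) (simp add: power_add algebra_simps power2_eq_square)
  show ?thesis unfolding eq Bmom_def
    using integral_diff[OF i1 i2] by (simp add: integral_mult_right)
qed

lemma comb_integrable:
  assumes "d \<ge> 1" "G \<in> Mclass d q" "i + 2 \<le> q" "even i"
  shows "(\<lambda>y. y ^ (d - 1 + i) * (y^2 - c) * G y) integrable_on {0..}"
proof -
  have eq: "(\<lambda>y. y ^ (d - 1 + i) * (y^2 - c) * G y) = (\<lambda>x. x ^ (d - 1 + (i+2)) * G x - c * (x ^ (d - 1 + i) * G x))"
    by (rule ext) (simp add: power_add algebra_simps power2_eq_square)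
  show ?thesis unfolding eq
    using integrable_diff[OF mom_int[OF assms(2), of "i+2"] integrable_on_cmult_left[OF mom_int[OF assms(2), of i], of c]] assms
    by simp
qed

lemma q2_case:
  assumes "d \<ge> 1" "G \<in> Mclass d 2" "sign_part G x 0"
  shows "(\<forall>t\<in>seg x 0 1. G t \<ge> 0) \<and> Bmom d 2 G > 0"
proof -
  have S: "seg x 0 1 = {0..}" using assms(3) by (simp add: seg_def sign_part_def)
  have B0: "Bmom d 0 G > 0" using assms(2) bconst_pos[OF assms(1)] by (simp add: Mclass_def)
  have B2: "Bmom d 2 G \<noteq> 0" using assms(2) by (simp add: Mclass_def)
  have i0: "(\<lambda>x. x ^ (d - 1 + 0) * G x) integrable_on {0..}" using mom_int[OF assms(2), of 0] by simp
  have i2: "(\<lambda>x. x ^ (d - 1 + 2) * G x) integrable_on {0..}" using mom_int[OF assms(2), of 2] by simp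
  have pos: "\<forall>t\<in>{0..}. G t \<ge> 0"
  proof (rule ccontr)
    assume "\<not> ?thesis"
    then have neg: "\<forall>t\<in>{0..}. G t \<le> (0::real)" using assms(3) S
      by (auto simp: sign_part_def)
    have "integral {0..} (\<lambda>x. - (x ^ (d - 1 + 0) * G x)) \<ge> 0"
      using neg by (intro integral_nonneg integrable_neg i0)
        (auto intro!: mult_nonneg_nonpos)
    then have "Bmom d 0 G \<le> 0" unfolding Bmom_def by simp
    with B0 show False by simp
  qed
  have "integral {0..} (\<lambda>x. x ^ (d - 1 + 2) * G x) \<ge> 0"
    using pos by (intro integral_nonneg i2) auto
  then have "Bmom d 2 G \<ge> 0" by (simp add: Bmom_def)
  with B2 pos S show ?thesis by auto
qed

lemma q4_signs:
  assumes "d \<ge> 1" "G \<in> Mclass d 4" "sign_part G x 1"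
  shows "(\<forall>t\<in>seg x 1 1. G t \<ge> 0) \<and> (\<forall>t\<in>seg x 1 2. G t \<le> 0)"
proof -
  define a where "a = x 1"
  have x0: "x 0 = 0" and apos: "a > 0" using assms(3) by (auto simp: sign_part_def a_def)
  have S1: "seg x 1 1 = {0..a}" using x0 by (simp add: seg_def a_def)
  have S2: "seg x 1 2 = {a..}" by (simp add: seg_def a_def)
  have c1: "((\<forall>t\<in>{0..a}. G t \<le> 0) \<and> (\<exists>t\<in>{0..a}. G t < 0)) \<or>
        ((\<forall>t\<in>{0..a}. G t \<ge> 0) \<and> (\<exists>t\<in>{0..a}. G t > 0))"
  proof -
    have "(1::nat) \<in> {1..Suc 1}" by simp
    then show ?thesis using assms(3) S1 unfolding sign_part_def by metis
  qed
  have c2: "((\<forall>t\<in>{a..}. G t \<le> 0) \<and> (\<exists>t\<in>{a..}. G t < 0)) \<or>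
        ((\<forall>t\<in>{a..}. G t \<ge> 0) \<and> (\<exists>t\<in>{a..}. G t > 0))"
  proof -
    have "(2::nat) \<in> {1..Suc 1}" by simp
    then show ?thesis using assms(3) S2 unfolding sign_part_def by (metis numeral_2_eq_2)
  qed
  have cross: "\<forall>s\<in>{0..a}. \<forall>t\<in>{a..}. G s * G t \<le> 0"
  proof -
    have "\<forall>s\<in>seg x 1 1. \<forall>t\<in>seg x 1 (Suc 1). G s * G t \<le> 0"
      using assms(3) unfolding sign_part_def by simp
    then show ?thesis using S1 S2 by (simp add: numeral_2_eq_2)
  qed
  have B0: "Bmom d 0 G > 0" using assms(2) bconst_pos[OF assms(1)] by (simp add: Mclass_def)
  have B2: "Bmom d 2 G = 0" using assms(2) by (simp add: Mclass_def)
  have first: "\<forall>t\<in>{0..a}. G t \<ge> 0"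
  proof (rule ccontr)
    assume na: "\<not> ?thesis"
    with c1 obtain s where s: "s \<in> {0..a}" "G s < 0" and n1: "\<forall>t\<in>{0..a}. G t \<le> 0" by auto
    have p2: "\<forall>t\<in>{a..}. G t \<ge> 0"
    proof (rule ccontr)
      assume "\<not> ?thesis"
      with c2 obtain t where "t \<in> {a..}" "G t < 0" by auto
      with s cross have "G s * G t \<le> 0" by auto
      moreover have "G s * G t > 0" using s \<open>G t < 0\<close> by (simp add: mult_neg_neg)
      ultimately show False by simp
    qed
    have "integral {0..} (\<lambda>y. y ^ (d - 1 + 0) * (y^2 - a^2) * G y) \<ge> 0"
    proof (rule integral_nonneg)
      show "(\<lambda>y. y ^ (d - 1 + 0) * (y^2 - a^2) * G y) integrable_on {0..}"
      proof -
        have "(\<lambda>y. y ^ (d - 1 + 0) * (y^2 - a^2) * G y) = (\<lambda>x. x ^ (d - 1 + (0+2)) * G x - a^2 * (x ^ (d - 1 + 0) * G x))"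
          by (rule ext) (simp add: power_add algebra_simps power2_eq_square)
        moreover have "(\<lambda>x. x ^ (d - 1 + (0+2)) * G x - a^2 * (x ^ (d - 1 + 0) * G x)) integrable_on {0..}"
          using integrable_diff[OF mom_int[OF assms(2), of 2] integrable_on_cmult_left[OF mom_int[OF assms(2), of 0], of "a^2"]]
          by simp
        ultimately show ?thesis by simp
      qed
    next
      fix y :: real assume y: "y \<in> {0..}"
      show "0 \<le> y ^ (d - 1 + 0) * (y^2 - a^2) * G y"
      proof (cases "y \<le> a")
        case True
        then have "y^2 - a^2 \<le> 0" using y by (simp add: power_mono)
        moreover have "G y \<le> 0" using n1 y True by auto
        ultimately have "0 \<le> (y^2 - a^2) * G y" by (simp add: mult_nonpos_nonpos)
        then show ?thesis using y by (simp add: mult.assoc)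
      next
        case False
        then have "y^2 - a^2 \<ge> 0" using apos by (simp add: power_mono)
        moreover have "G y \<ge> 0" using p2 False by auto
        ultimately have "0 \<le> (y^2 - a^2) * G y" by simp
        then show ?thesis using y by (simp add: mult.assoc)
      qed
    qed
    then have "Bmom d 2 G - a^2 * Bmom d 0 G \<ge> 0"
      using comb_int[OF assms(1,2), of 0 "a^2"] by (simp add: numeral_2_eq_2)
    moreover have "a^2 * Bmom d 0 G > 0" using B0 apos by simp
    ultimately show False using B2 by simp
  qed
  with c1 obtain s where s: "s \<in> {0..a}" "G s > 0"
    by (metis atLeastAtMost_iff le_refl less_le_not_le apos less_imp_le)
  have second: "\<forall>t\<in>{a..}. G t \<le> 0"
  proof (rule ccontr)
    assume "\<not> ?thesis"
    with c2 obtain t where "t \<in> {a..}" "G t > 0" by auto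
    with s cross have "G s * G t \<le> 0" by auto
    moreover have "G s * G t > 0" using s \<open>G t > 0\<close> by simp
    ultimately show False by simp
  qed
  show ?thesis using first second S1 S2 by simp
qed

lemma q4_B4:
  assumes "d \<ge> 1" "G \<in> Mclass d 4" "sign_part G x 1"
  shows "Bmom d 4 G < 0"
proof -
  define a where "a = x 1"
  have x0: "x 0 = 0" and apos: "a > 0" using assms(3) by (auto simp: sign_part_def a_def)
  have S1: "seg x 1 1 = {0..a}" using x0 by (simp add: seg_def a_def)
  have S2: "seg x 1 2 = {a..}" by (simp add: seg_def a_def)
  have sg: "\<forall>t\<in>{0..a}. G t \<ge> 0" "\<forall>t\<in>{a..}. G t \<le> 0"
    using q4_signs[OF assms] S1 S2 by auto
  have B2: "Bmom d 2 G = 0" using assms(2) by (simp add: Mclass_def)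
  have B4: "Bmom d 4 G \<noteq> 0" using assms(2) by (simp add: Mclass_def)
  have int: "(\<lambda>y. y ^ (d - 1 + 2) * (y^2 - a^2) * G y) integrable_on {0..}"
    by (rule comb_integrable[OF assms(1,2)]) auto
  have "integral {0..} (\<lambda>y. - (y ^ (d - 1 + 2) * (y^2 - a^2) * G y)) \<ge> 0"
  proof (rule integral_nonneg)
    show "(\<lambda>y. - (y ^ (d - 1 + 2) * (y^2 - a^2) * G y)) integrable_on {0..}"
      using int by (rule integrable_neg)
  next
    fix y :: real assume y: "y \<in> {0..}"
    have "0 \<le> - ((y^2 - a^2) * G y)"
    proof (cases "y \<le> a")
      case True
      then have "y^2 - a^2 \<le> 0" using y by (simp add: power_mono)
      moreover have "G y \<ge> 0" using sg y True by auto
      ultimately show ?thesis by (simp add: mult_nonpos_nonneg)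
    next
      case False
      then have "y^2 - a^2 \<ge> 0" using apos by (simp add: power_mono)
      moreover have "G y \<le> 0" using sg False by auto
      ultimately show ?thesis by (simp add: mult_nonneg_nonpos)
    qed
    moreover have "0 \<le> y ^ (d - 1 + 2)" using y by simp
    ultimately have "0 \<le> y ^ (d - 1 + 2) * - ((y^2 - a^2) * G y)" by (metis mult_nonneg_nonneg)
    then show "0 \<le> - (y ^ (d - 1 + 2) * (y^2 - a^2) * G y)" by (simp add: mult.assoc)
  qed
  then have "integral {0..} (\<lambda>y. y ^ (d - 1 + 2) * (y^2 - a^2) * G y) \<le> 0" by simp
  then have "Bmom d 4 G - a^2 * Bmom d 2 G \<le> 0"
    using comb_int[OF assms(1,2), of 2 "a^2"] by simp
  with B2 B4 show ?thesis by simp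
qed

theorem lemmaB3:
  fixes d q :: nat and G :: "real \<Rightarrow> real"
  assumes "d \<ge> 1" and "q \<in> {2, 4}"
    and "G \<in> Mclass d q" and "G \<in> Nclass (q div 2 - 1)"
  shows "(\<forall>x. sign_part G x (q div 2 - 1) \<longrightarrow>
            (\<forall>j\<in>{1..q div 2}. odd j \<longrightarrow> (\<forall>t\<in>seg x (q div 2 - 1) j. G t \<ge> 0)) \<and>
            (\<forall>j\<in>{1..q div 2}. even j \<longrightarrow> (\<forall>t\<in>seg x (q div 2 - 1) j. G t \<le> 0)))
         \<and> sgn (Bmom d q G) = (-1) ^ (q div 2 + 1)"
proof -
  obtain x0 where x0: "sign_part G x0 (q div 2 - 1)"
    using assms(4) by (auto simp: Nclass_def changes_sign_def)
  consider "q = 2" | "q = 4" using assms(2) by auto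
  then show ?thesis
  proof cases
    case 1
    have A: "\<forall>x. sign_part G x 0 \<longrightarrow> (\<forall>t\<in>seg x 0 1. G t \<ge> 0)"
      using q2_case[OF assms(1)] assms(3) 1 by blast
    have "Bmom d 2 G > 0" using q2_case[OF assms(1)] assms(3) 1 x0 by auto
    then show ?thesis using A 1 by auto
  next
    case 2
    have A: "\<forall>x. sign_part G x 1 \<longrightarrow> (\<forall>t\<in>seg x 1 1. G t \<ge> 0) \<and> (\<forall>t\<in>seg x 1 2. G t \<le> 0)"
      using q4_signs[OF assms(1)] assms(3) 2 by blast
    have "Bmom d 4 G < 0" using q4_B4[OF assms(1)] assms(3) 2 x0 by auto
    moreover have "{1..2::nat} = {1,2}" by auto
    ultimately show ?thesis using A 2 by auto
  qed
qed

end
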